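(* For $n\ge 1$ let $\tau$ be a recursive tree of size $n$ chosen uniformly at random, and let $X_n$ be the number of distinct shapes (Pólya trees) among the fringe subtrees of $\tau$, i.e. the size of the compacted tree of $\tau$. Then \[ \mathbb{E}(X_n) = \mathcal{O}\!\left(\frac{n}{\log n}\right) \quad \text{as } n\to\infty . \]
   Context: A recursive tree of size $n$ is a rooted non-plane (unordered) tree with $n$ nodes carrying the distinct labels $1,\dots,n$ such that labels increase along every path from the root to a leaf; there are $(n-1)!$ of them. A Pólya tree is an unlabeled rooted non-plane tree; the shape of a (labeled) tree is the Pólya tree obtained by forgetting its labels. A fringe subtree of a rooted tree is a node together with all of its descendants. The compacted tree keeps one copy of each distinct fringe-subtree shape, so its size is the number of distinct fringe-subtree shapes. *)

theory Defs
  imports Complex_Main "HOL-Library.Multiset" "HOL-Library.Landau_Symbols"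
begin

text \<open>Polya trees: unlabeled rooted non-plane trees (a node with a multiset of children).\<close>
datatype ptree = PNode "ptree multiset"

text \<open>A recursive tree of size n is encoded by its parent map: the node set is {1..n},
  the root is 1, and every node i in {2..n} has parent p i with 1 \<le> p i < i.
  Outside {2..n} the map is 0 (so the encoding is unique). This is a bijection with
  increasingly labelled rooted unordered trees on {1..n}; there are (n-1)! of them.\<close>
definition recursive_trees :: "nat \<Rightarrow> (nat \<Rightarrow> nat) set" where
  "recursive_trees n = {p. (\<forall>i\<in>{2..n}. 1 \<le> p i \<and> p i < i) \<and> (\<forall>i. i \<notin> {2..n} \<longrightarrow> p i = 0)}"

function fringe_shape :: "nat \<Rightarrow> (nat \<Rightarrow> nat) \<Rightarrow> nat \<Rightarrow> ptree" where
  "fringe_shape n p v =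
     PNode (mset (map (fringe_shape n p) (sorted_list_of_set {i. v < i \<and> i \<le> n \<and> p i = v})))"
  by auto
termination
  by (relation "measure (\<lambda>(n, p, v). n - v)") auto

definition compacted_size :: "nat \<Rightarrow> (nat \<Rightarrow> nat) \<Rightarrow> nat" where
  "compacted_size n p = card (fringe_shape n p ` {1..n})"

definition expected_compacted_size :: "nat \<Rightarrow> real" where
  "expected_compacted_size n =
     (\<Sum>p\<in>recursive_trees n. real (compacted_size n p)) / real (card (recursive_trees n))"

end

theory Submission
  imports Defs
begin

fun run :: "bool list \<Rightarrow> ptree multiset list \<Rightarrow> ptree multiset list" where
  "run [] S = S"
| "run (True # w) S = run w ({#} # S)"
| "run (False # w) (M1 # M2 # S) = run w (add_mset (PNode M1) M2 # S)"
| "run (False # w) S = run w S"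

definition dec :: "bool list \<Rightarrow> ptree" where
  "dec w = (SOME t. t \<in># hd (run w [{#}]))"

function D :: "nat \<Rightarrow> (nat \<Rightarrow> nat) \<Rightarrow> nat \<Rightarrow> nat set" where
  "D n p v = insert v (\<Union>c\<in>{i. v < i \<and> i \<le> n \<and> p i = v}. D n p c)"
  by auto
termination
  by (relation "measure (\<lambda>(n, p, v). n - v)") auto

declare D.simps[simp del] fringe_shape.simps[simp del]

lemma D_range: "i \<in> D n p v \<Longrightarrow> i = v \<or> (v < i \<and> i \<le> n)"
proof (induction n p v rule: D.induct)
  case (1 n p v)
  from "1.prems" show ?case
    apply (subst (asm) D.simps) using "1.IH" by fastforce
qed

lemma D_child_sub: "v < c \<Longrightarrow> c \<le> n \<Longrightarrow> p c = v \<Longrightarrow> D n p c \<subseteq> D n p v"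
  by (subst (2) D.simps) auto

lemma D_parent: "i \<in> D n p c \<Longrightarrow> i \<noteq> c \<Longrightarrow> p i \<in> D n p c"
proof (induction n p c rule: D.induct)
  case (1 n p v)
  from "1.prems"(1) obtain c where c: "v < c" "c \<le> n" "p c = v" "i \<in> D n p c"
    using "1.prems"(2) by (subst (asm) D.simps) auto
  show ?case
  proof (cases "i = c")
    case True then show ?thesis using c by (subst D.simps) auto
  next
    case False
    then have "p i \<in> D n p c" using "1.IH" c by auto
    then show ?thesis using D_child_sub[of v c n p] c by auto
  qed
qed

lemma D_ext:
  assumes "v \<le> n"
  shows "D (Suc n) (p(Suc n := j)) v = D n p v \<union> (if j \<in> D n p v then {Suc n} else {})"
  using assms
proof (induction n p v rule: D.induct)
  case (1 n p v)
  let ?q = "p(Suc n := j)"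
  have top: "D (Suc n) ?q (Suc n) = {Suc n}" by (subst D.simps) auto
  have ch: "{i. v < i \<and> i \<le> Suc n \<and> ?q i = v} = {i. v < i \<and> i \<le> n \<and> p i = v} \<union> (if j = v then {Suc n} else {})"
    using "1.prems" by (auto simp: le_Suc_eq)
  have IH: "\<And>c. c \<in> {i. v < i \<and> i \<le> n \<and> p i = v} \<Longrightarrow> D (Suc n) ?q c = D n p c \<union> (if j \<in> D n p c then {Suc n} else {})"
    by (rule "1.IH") auto
  have U1: "(\<Union>c\<in>{i. v < i \<and> i \<le> Suc n \<and> ?q i = v}. D (Suc n) ?q c) = (\<Union>c\<in>{i. v < i \<and> i \<le> n \<and> p i = v}. D (Suc n) ?q c) \<union> (if j = v then {Suc n} else {})"
    unfolding ch using top by auto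
  have U2: "(\<Union>c\<in>{i. v < i \<and> i \<le> n \<and> p i = v}. D (Suc n) ?q c) = (\<Union>c\<in>{i. v < i \<and> i \<le> n \<and> p i = v}. D n p c \<union> (if j \<in> D n p c then {Suc n} else {}))"
    by (rule SUP_cong[OF refl IH])
  have "D (Suc n) ?q v = insert v (\<Union>c\<in>{i. v < i \<and> i \<le> Suc n \<and> ?q i = v}. D (Suc n) ?q c)"
    by (subst D.simps) simp
  also have "\<dots> = insert v ((\<Union>c\<in>{i. v < i \<and> i \<le> n \<and> p i = v}. D n p c \<union> (if j \<in> D n p c then {Suc n} else {})) \<union> (if j = v then {Suc n} else {}))"
    unfolding U1 U2 by simp
  also have "\<dots> = D n p v \<union> (if j \<in> D n p v then {Suc n} else {})"
    by (subst (1 2) D.simps) (auto split: if_splits)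
  finally show ?case .
qed


lemma RT_valid: "p \<in> recursive_trees n \<Longrightarrow> i \<in> {2..n} \<Longrightarrow> 1 \<le> p i \<and> p i < i"
  unfolding recursive_trees_def by auto

lemma D_disj:
  assumes p: "p \<in> recursive_trees n"
    and c1: "v < c1" "c1 \<le> n" "p c1 = v" and c2: "v < c2" "c2 \<le> n" "p c2 = v" and ne: "c1 \<noteq> c2"
  shows "i \<notin> D n p c1 \<inter> D n p c2"
proof (induction i rule: less_induct)
  case (less i)
  show ?case
  proof
    assume i: "i \<in> D n p c1 \<inter> D n p c2"
    show False
    proof (cases "i = c1 \<or> i = c2")
      case True
      then show False
      proof
        assume "i = c1"
        then have "p i \<in> D n p c2" using i ne D_parent by blast
        then show False using D_range[of "p i" n p c2] c1 c2 \<open>i = c1\<close> by auto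
      next
        assume "i = c2"
        then have "p i \<in> D n p c1" using i ne D_parent by blast
        then show False using D_range[of "p i" n p c1] c1 c2 \<open>i = c2\<close> by auto
      qed
    next
      case False
      then have "p i \<in> D n p c1 \<inter> D n p c2" using i D_parent by blast
      moreover have "i \<in> {2..n}" using False i D_range[of i n p c1] c1 by auto
      then have "p i < i" using RT_valid[OF p] by auto
      ultimately show False using less by blast
    qed
  qed
qed

lemma D_finite: "finite (D n p v)"
proof -
  have "D n p v \<subseteq> insert v {..n}" using D_range by fastforce
  then show ?thesis using finite_subset by blast
qed

lemma D_card:
  assumes p: "p \<in> recursive_trees n"
  shows "card (D n p v) = Suc (\<Sum>c\<in>{i. v < i \<and> i \<le> n \<and> p i = v}. card (D n p c))"
proof -
  let ?C = "{i. v < i \<and> i \<le> n \<and> p i = v}"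
  have fin: "finite ?C" by (rule finite_subset[of _ "{..n}"]) auto
  have nv: "v \<notin> (\<Union>c\<in>?C. D n p c)" using D_range by fastforce
  have "card (\<Union>c\<in>?C. D n p c) = (\<Sum>c\<in>?C. card (D n p c))"
    apply (rule card_UN_disjoint[OF fin])
    using D_finite apply blast
    using D_disj[OF p] by blast
  then show ?thesis
    apply (subst D.simps)
    using nv fin D_finite by (simp add: card_insert_if)
qed

lemma words_list:
  assumes "\<forall>x\<in>set xs. \<exists>w. length w = 2 * g x \<and> (\<forall>rest S M. run (w @ rest) (M # S) = run rest (add_mset (f x) M # S))"
  shows "\<exists>ws. length ws = 2 * sum_list (map g xs) \<and> (\<forall>rest S M. run (ws @ rest) (M # S) = run rest ((M + mset (map f xs)) # S))"
  using assms
proof (induction xs)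
  case Nil
  then show ?case by (intro exI[of _ "[]"]) simp
next
  case (Cons x xs)
  obtain w where w: "length w = 2 * g x" "\<forall>rest S M. run (w @ rest) (M # S) = run rest (add_mset (f x) M # S)"
    using Cons.prems by auto
  obtain ws where ws: "length ws = 2 * sum_list (map g xs)" "\<forall>rest S M. run (ws @ rest) (M # S) = run rest ((M + mset (map f xs)) # S)"
    using Cons by auto
  show ?case
    by (intro exI[of _ "w @ ws"]) (simp add: w ws)
qed

lemma word_shape:
  assumes "p \<in> recursive_trees n"
  shows "\<exists>w. length w = 2 * card (D n p v) \<and> (\<forall>rest S M. run (w @ rest) (M # S) = run rest (add_mset (fringe_shape n p v) M # S))"
  using assms
proof (induction n p v rule: fringe_shape.induct)
  case (1 n p v)
  let ?C = "{i. v < i \<and> i \<le> n \<and> p i = v}"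
  have fin: "finite ?C" by (rule finite_subset[of _ "{..n}"]) auto
  let ?xs = "sorted_list_of_set ?C"
  have pre: "\<forall>x\<in>set ?xs. \<exists>w. length w = 2 * card (D n p x) \<and> (\<forall>rest S M. run (w @ rest) (M # S) = run rest (add_mset (fringe_shape n p x) M # S))"
    using fin "1.IH"[OF _ "1.prems"] by simp
  obtain ws where ws: "length ws = 2 * sum_list (map (\<lambda>c. card (D n p c)) ?xs)"
     "\<forall>rest S M. run (ws @ rest) (M # S) = run rest ((M + mset (map (fringe_shape n p) ?xs)) # S)"
    using words_list[of ?xs "\<lambda>c. card (D n p c)" "fringe_shape n p"] pre by blast
  have sl: "sum_list (map (\<lambda>c. card (D n p c)) ?xs) = (\<Sum>c\<in>?C. card (D n p c))"
    using fin by (simp add: sum_list_distinct_conv_sum_set)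
  show ?case
  proof (intro exI[of _ "True # ws @ [False]"] conjI allI)
    show "length (True # ws @ [False]) = 2 * card (D n p v)"
    proof -
      have c: "card (D n p v) = Suc (\<Sum>c\<in>?C. card (D n p c))" by (rule D_card[OF "1.prems"])
      have "length (True # ws @ [False]) = 2 + length ws" by simp
      then show ?thesis using ws(1) sl c by linarith
    qed
    fix rest S M
    have "run ((True # ws @ [False]) @ rest) (M # S) = run (ws @ (False # rest)) ({#} # M # S)"
      by simp
    also have "\<dots> = run (False # rest) (({#} + mset (map (fringe_shape n p) ?xs)) # M # S)"
      using ws(2) by blast
    also have "\<dots> = run rest (add_mset (PNode (mset (map (fringe_shape n p) ?xs))) M # S)"
      by simp
    also have "PNode (mset (map (fringe_shape n p) ?xs)) = fringe_shape n p v"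
      by (rule fringe_shape.simps[symmetric])
    finally show "run ((True # ws @ [False]) @ rest) (M # S) = run rest (add_mset (fringe_shape n p v) M # S)" .
  qed
qed

lemma RT_0: "recursive_trees 0 = {\<lambda>_. 0}"
  unfolding recursive_trees_def by auto

lemma RT_1: "recursive_trees (Suc 0) = {\<lambda>_. 0}"
  unfolding recursive_trees_def by auto

lemma RT_Suc_eq:
  assumes "n \<ge> 1"
  shows "recursive_trees (Suc n) = (\<lambda>(p, j). p(Suc n := j)) ` (recursive_trees n \<times> {1..n})"
proof
  show "(\<lambda>(p, j). p(Suc n := j)) ` (recursive_trees n \<times> {1..n}) \<subseteq> recursive_trees (Suc n)"
    using assms unfolding recursive_trees_def by (auto simp: le_Suc_eq)
next
  show "recursive_trees (Suc n) \<subseteq> (\<lambda>(p, j). p(Suc n := j)) ` (recursive_trees n \<times> {1..n})"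
  proof
    fix q assume q: "q \<in> recursive_trees (Suc n)"
    have "q = (\<lambda>(p, j). p(Suc n := j)) (q(Suc n := 0), q (Suc n))" by simp
    moreover have "q(Suc n := 0) \<in> recursive_trees n"
      using q unfolding recursive_trees_def by (auto simp: le_Suc_eq)
    moreover have "q (Suc n) \<in> {1..n}"
    proof -
      have "\<forall>i\<in>{2..Suc n}. 1 \<le> q i \<and> q i < i" using q unfolding recursive_trees_def by blast
      moreover have "Suc n \<in> {2..Suc n}" using assms by auto
      ultimately show ?thesis by fastforce
    qed
    ultimately show "q \<in> (\<lambda>(p, j). p(Suc n := j)) ` (recursive_trees n \<times> {1..n})"
      by blast
  qed
qed

lemma RT_Suc_inj:
  "inj_on (\<lambda>(p, j). p(Suc n := j)) (recursive_trees n \<times> {1..n})"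
proof (rule inj_onI, clarsimp)
  fix p j p' j'
  assume p: "p \<in> recursive_trees n" and p': "p' \<in> recursive_trees n"
    and eq: "p(Suc n := j) = p'(Suc n := j')"
  have "j = j'" using fun_cong[OF eq, of "Suc n"] by simp
  moreover have "p x = p' x" for x
  proof (cases "x = Suc n")
    case True
    then show ?thesis using p p' unfolding recursive_trees_def by auto
  next
    case False
    then show ?thesis using fun_cong[OF eq, of x] by simp
  qed
  ultimately show "p = p' \<and> j = j'" by auto
qed

lemma RT_finite: "finite (recursive_trees n)"
proof (induction n)
  case 0 then show ?case by (simp add: RT_0)
next
  case (Suc n)
  show ?case
  proof (cases "n = 0")
    case True then show ?thesis by (simp add: RT_1)
  next
    case False
    then show ?thesis using Suc RT_Suc_eq[of n] by simp
  qed
qed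

lemma RT_card_pos: "card (recursive_trees n) > 0"
proof (induction n)
  case 0 then show ?case by (simp add: RT_0)
next
  case (Suc n)
  show ?case
  proof (cases "n = 0")
    case True then show ?thesis by (simp add: RT_1)
  next
    case False
    then have "card (recursive_trees (Suc n)) = card (recursive_trees n) * n"
      using RT_Suc_eq[of n] RT_Suc_inj[of n] RT_finite[of n]
      by (simp add: card_image card_cartesian_product)
    then show ?thesis using Suc False by simp
  qed
qed

lemma RT_card_Suc: "n \<ge> 1 \<Longrightarrow> card (recursive_trees (Suc n)) = card (recursive_trees n) * n"
  using RT_Suc_eq[of n] RT_Suc_inj[of n] RT_finite[of n]
  by (simp add: card_image card_cartesian_product)

lemma RT_sum_Suc:
  assumes "n \<ge> 1"
  shows "(\<Sum>q\<in>recursive_trees (Suc n). f q) = (\<Sum>p\<in>recursive_trees n. \<Sum>j\<in>{1..n}. f (p(Suc n := j)))"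
proof -
  have "(\<Sum>q\<in>recursive_trees (Suc n). f q) = (\<Sum>x\<in>recursive_trees n \<times> {1..n}. f ((\<lambda>(p, j). p(Suc n := j)) x))"
    unfolding RT_Suc_eq[OF assms] by (rule sum.reindex[OF RT_Suc_inj, unfolded comp_def])
  also have "\<dots> = (\<Sum>p\<in>recursive_trees n. \<Sum>j\<in>{1..n}. f (p(Suc n := j)))"
    by (subst sum.cartesian_product) (simp add: split_beta)
  finally show ?thesis .
qed

lemma D_sub: "1 \<le> v \<Longrightarrow> v \<le> n \<Longrightarrow> D n p v \<subseteq> {1..n}"
  using D_range by fastforce

lemma D_base: "D v p v = {v}"
  by (subst D.simps) auto

definition W :: "nat \<Rightarrow> nat \<Rightarrow> (nat \<Rightarrow> nat) \<Rightarrow> nat" where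
  "W v n p = card (D n p v)"

lemma Q_step:
  assumes "1 \<le> v" "v \<le> n" "p \<in> recursive_trees n"
  shows "(\<Sum>j\<in>{1..n}. real (W v (Suc n) (p(Suc n := j))) * (W v (Suc n) (p(Suc n := j)) + 1))
       = (n + 2) * (real (W v n p) * (W v n p + 1))"
proof -
  let ?A = "D n p v"
  have fin: "finite ?A" by (rule D_finite)
  have sub: "?A \<subseteq> {1..n}" using D_sub assms by blast
  have Sn: "Suc n \<notin> ?A" using sub by auto
  have Wj: "W v (Suc n) (p(Suc n := j)) = (if j \<in> ?A then W v n p + 1 else W v n p)" for j
    unfolding W_def D_ext[OF assms(2)] using fin Sn by auto
  have cA: "card ?A = W v n p" by (simp add: W_def)
  have Wn: "W v n p \<le> n" using card_mono[OF _ sub] cA by simp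
  have "(\<Sum>j\<in>{1..n}. real (W v (Suc n) (p(Suc n := j))) * (W v (Suc n) (p(Suc n := j)) + 1))
     = (\<Sum>j\<in>?A. real (W v n p + 1) * (W v n p + 2)) + (\<Sum>j\<in>{1..n} - ?A. real (W v n p) * (W v n p + 1))"
    apply (subst sum.subset_diff[OF sub])
     apply simp
    apply (simp add: Wj)
    done
  also have "\<dots> = real (W v n p) * (W v n p + 1) * (W v n p + 2) + (real n - W v n p) * (real (W v n p) * (W v n p + 1))"
    using sub fin cA Wn by (simp add: card_Diff_subset of_nat_diff)
  also have "\<dots> = (n + 2) * (real (W v n p) * (W v n p + 1))"
    by (simp add: algebra_simps)
  finally show ?thesis by simp
qed

lemma Q_formula:
  assumes "1 \<le> v" "v \<le> n"
  shows "(\<Sum>p\<in>recursive_trees n. real (W v n p) * (W v n p + 1))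
       = real (card (recursive_trees n)) * (2 * n * (n + 1) / (v * (v + 1)))"
  using assms(2)
proof (induction n rule: dec_induct)
  case base
  have "W v v p = 1" for p by (simp add: W_def D_base)
  then show ?case using assms by simp
next
  case (step n)
  have n1: "n \<ge> 1" using step assms by simp
  have "(\<Sum>p\<in>recursive_trees (Suc n). real (W v (Suc n) p) * (W v (Suc n) p + 1))
      = (\<Sum>p\<in>recursive_trees n. (n + 2) * (real (W v n p) * (W v n p + 1)))"
    unfolding RT_sum_Suc[OF n1] using Q_step assms(1) step.hyps(1) by (intro sum.cong) auto
  also have "\<dots> = (n + 2) * (real (card (recursive_trees n)) * (2 * n * (n + 1) / (v * (v + 1))))"
    unfolding sum_distrib_left[symmetric] step.IH by (simp add: algebra_simps)
  also have "\<dots> = real (card (recursive_trees (Suc n))) * (2 * Suc n * (Suc n + 1) / (v * (v + 1)))"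
    by (simp add: RT_card_Suc[OF n1] field_simps)
  finally show ?case by (simp add: algebra_simps)
qed


lemma dec_shape:
  assumes "p \<in> recursive_trees n"
  shows "\<exists>w. length w = 2 * W v n p \<and> dec w = fringe_shape n p v"
proof -
  obtain w where w: "length w = 2 * card (D n p v)"
    "\<forall>rest S M. run (w @ rest) (M # S) = run rest (add_mset (fringe_shape n p v) M # S)"
    using word_shape[OF assms] by blast
  have "run w [{#}] = [{#fringe_shape n p v#}]" using w(2)[rule_format, of "[]" "{#}" "[]"] by simp
  then have "dec w = fringe_shape n p v" unfolding dec_def by simp
  then show ?thesis using w(1) unfolding W_def by blast
qed

lemma geom_bound: "(\<Sum>i\<le>L. (2::nat)^i) < 2^(Suc L)"
  by (induction L) auto

lemma card_small:
  assumes "p \<in> recursive_trees n"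
  shows "card (fringe_shape n p ` {v\<in>{1..n}. W v n p \<le> k}) \<le> 2^(2*k+1)"
proof -
  let ?L = "{w::bool list. set w \<subseteq> UNIV \<and> length w \<le> 2 * k}"
  have "fringe_shape n p ` {v\<in>{1..n}. W v n p \<le> k} \<subseteq> dec ` ?L"
  proof
    fix t assume "t \<in> fringe_shape n p ` {v\<in>{1..n}. W v n p \<le> k}"
    then obtain v where v: "W v n p \<le> k" "t = fringe_shape n p v" by auto
    obtain w where "length w = 2 * W v n p" "dec w = fringe_shape n p v"
      using dec_shape[OF assms] by blast
    then have "dec w \<in> dec ` ?L" using v(1) by (intro imageI) simp
    then show "t \<in> dec ` ?L" using v \<open>dec w = fringe_shape n p v\<close> by simp
  qed
  moreover have fin: "finite ?L" by (rule finite_lists_length_le) simp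
  ultimately have "card (fringe_shape n p ` {v\<in>{1..n}. W v n p \<le> k}) \<le> card (dec ` ?L)"
    by (intro card_mono) auto
  also have "\<dots> \<le> card ?L" using fin by (rule card_image_le)
  also have "\<dots> = (\<Sum>i\<le>2*k. 2^i)" by (subst card_lists_length_le) auto
  also have "\<dots> \<le> 2^(2*k+1)" using geom_bound[of "2*k"] by simp
  finally show ?thesis .
qed

lemma per_tree_bound:
  assumes p: "p \<in> recursive_trees n" and k: "k \<ge> 1"
  shows "real (compacted_size n p) \<le> (2::real)^(2*k+1) + real m + (\<Sum>v\<in>{m+1..n}. real (W v n p) * (real (W v n p) + 1) / (real k * (real k + 1)))"
proof -
  let ?fs = "fringe_shape n p"
  let ?S = "{v\<in>{1..n}. W v n p \<le> k}" and ?B = "{v\<in>{1..n}. \<not> W v n p \<le> k}"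
  have "card (?fs ` {1..n}) \<le> card (?fs ` ?S \<union> ?fs ` ?B)"
    by (intro card_mono) auto
  also have "\<dots> \<le> card (?fs ` ?S) + card (?fs ` ?B)" by (rule card_Un_le)
  also have "\<dots> \<le> 2^(2*k+1) + card ?B"
    using card_small[OF p, of k] card_image_le[of ?B ?fs] by simp
  finally have c1: "card (?fs ` {1..n}) \<le> 2^(2*k+1) + card ?B" .
  have "card ?B \<le> card (?B \<inter> {..m} \<union> ?B \<inter> {m+1..n})" by (intro card_mono) auto
  also have "\<dots> \<le> card (?B \<inter> {..m}) + card (?B \<inter> {m+1..n})" by (rule card_Un_le)
  also have "\<dots> \<le> m + card (?B \<inter> {m+1..n})"
  proof -
    have "card (?B \<inter> {..m}) \<le> card {1..m}" by (intro card_mono) auto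
    then show ?thesis by simp
  qed
  finally have c2: "card ?B \<le> m + card (?B \<inter> {m+1..n})" .
  have "real (card (?B \<inter> {m+1..n})) = (\<Sum>v\<in>?B \<inter> {m+1..n}. 1)" by simp
  also have "\<dots> \<le> (\<Sum>v\<in>?B \<inter> {m+1..n}. real (W v n p) * (real (W v n p) + 1) / (real k * (real k + 1)))"
  proof (rule sum_mono)
    fix v assume "v \<in> ?B \<inter> {m+1..n}"
    then have "W v n p \<ge> k + 1" by auto
    then have "real k * (real k + 1) \<le> real (W v n p) * (real (W v n p) + 1)"
      by (intro mult_mono) auto
    moreover have "0 < real k * (real k + 1)" using k by simp
    ultimately show "1 \<le> real (W v n p) * (real (W v n p) + 1) / (real k * (real k + 1))"
      by (simp add: le_divide_eq algebra_simps)
  qed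
  also have "\<dots> \<le> (\<Sum>v\<in>{m+1..n}. real (W v n p) * (real (W v n p) + 1) / (real k * (real k + 1)))"
    by (intro sum_mono2) auto
  finally have c3: "real (card (?B \<inter> {m+1..n})) \<le> (\<Sum>v\<in>{m+1..n}. real (W v n p) * (real (W v n p) + 1) / (real k * (real k + 1)))" .
  have r1: "real (card (?fs ` {1..n})) \<le> real (2^(2*k+1) + card ?B)"
    using c1 by (simp only: of_nat_le_iff)
  have r2: "real (card ?B) \<le> real (m + card (?B \<inter> {m+1..n}))"
    using c2 by (simp only: of_nat_le_iff)
  have "real (compacted_size n p) \<le> (2::real)^(2*k+1) + real m + real (card (?B \<inter> {m+1..n}))"
    using r1 r2 unfolding compacted_size_def of_nat_add of_nat_power of_nat_numeral by linarith
  then show ?thesis using add_left_mono[OF c3, of "2^(2*k+1) + real m"] by (rule order_trans)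
qed

lemma telescope:
  assumes "m \<le> n"
  shows "(\<Sum>v\<in>{m+1..n}. 1 / (real v * (real v + 1))) = 1 / (real m + 1) - 1 / (real n + 1)"
  using assms
proof (induction n rule: dec_induct)
  case base then show ?case by simp
next
  case (step n)
  have "{m+1..Suc n} = insert (Suc n) {m+1..n}" using step by auto
  then have "(\<Sum>v\<in>{m+1..Suc n}. 1 / (real v * (real v + 1))) = 1 / (real (Suc n) * (real (Suc n) + 1)) + (\<Sum>v\<in>{m+1..n}. 1 / (real v * (real v + 1)))"
    by simp
  also have "\<dots> = 1 / (real (Suc n) * (real (Suc n) + 1)) + (1 / (real m + 1) - 1 / (real n + 1))"
    by (simp only: step.IH)
  also have "\<dots> = 1 / (real m + 1) - 1 / (real (Suc n) + 1)"
  proof -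
    have "1 / (real (Suc n) * (real (Suc n) + 1)) = 1 / (real n + 1) - 1 / (real (Suc n) + 1)"
      by (simp add: field_simps)
    then show ?thesis by linarith
  qed
  finally show ?case .
qed


lemma E_bound:
  assumes n: "n \<ge> 1" and k: "k \<ge> 1" and m: "m \<le> n"
  shows "expected_compacted_size n \<le> 2^(2*k+1) + m + 2 * real n * (n + 1) / (real k * (k + 1)) * (1 / (real m + 1))"
proof -
  let ?R = "recursive_trees n"
  define c where "c = real (card ?R)"
  have c: "c > 0" unfolding c_def using RT_card_pos by simp
  define C :: real where "C = 2^(2*k+1) + m"
  define K :: real where "K = real k * (k + 1)"
  have "(\<Sum>p\<in>?R. real (compacted_size n p)) \<le> (\<Sum>p\<in>?R. C + (\<Sum>v\<in>{m+1..n}. real (W v n p) * (W v n p + 1) / K))"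
  proof (rule sum_mono)
    fix p assume "p \<in> ?R"
    from per_tree_bound[OF this k, of m] show "real (compacted_size n p) \<le> C + (\<Sum>v\<in>{m+1..n}. real (W v n p) * (W v n p + 1) / K)"
      unfolding C_def K_def by (simp add: ac_simps)
  qed
  also have "\<dots> = c * C + (\<Sum>v\<in>{m+1..n}. (\<Sum>p\<in>?R. real (W v n p) * (W v n p + 1)) / K)"
    unfolding c_def sum.distrib sum_divide_distrib by (subst sum.swap) simp
  also have "\<dots> = c * C + (\<Sum>v\<in>{m+1..n}. c * (2 * n * (n + 1) / (v * (v + 1))) / K)"
  proof (intro arg_cong2[where f="(+)"] refl sum.cong)
    fix v assume "v \<in> {m+1..n}"
    then have "1 \<le> v" "v \<le> n" by auto
    from Q_formula[OF this] show "(\<Sum>p\<in>?R. real (W v n p) * (W v n p + 1)) / K = c * (2 * n * (n + 1) / (v * (v + 1))) / K"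
      unfolding c_def by (simp add: algebra_simps)
  qed
  also have "\<dots> = c * C + c * (2 * n * (n + 1) / K) * (\<Sum>v\<in>{m+1..n}. 1 / (real v * (real v + 1)))"
    unfolding sum_distrib_left
  proof (intro arg_cong2[where f="(+)"] refl sum.cong)
    fix v assume "v \<in> {m+1..n}"
    then have "real v > 0" by simp
    then show "c * (2 * n * (n + 1) / (v * (v + 1))) / K = c * (2 * n * (n + 1) / K) * (1 / (real v * (real v + 1)))"
      by (simp add: field_simps)
  qed
  also have "\<dots> \<le> c * C + c * (2 * n * (n + 1) / K) * (1 / (real m + 1))"
    unfolding telescope[OF m] using c unfolding K_def using k
    by (intro add_left_mono mult_left_mono) simp_all
  finally have "(\<Sum>p\<in>?R. real (compacted_size n p)) \<le> c * (C + 2 * n * (n + 1) / K * (1 / (real m + 1)))"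
    by (simp add: algebra_simps)
  then have "expected_compacted_size n \<le> C + 2 * n * (n + 1) / K * (1 / (real m + 1))"
    unfolding expected_compacted_size_def c_def[symmetric] using c by (simp add: divide_le_eq mult.commute)
  then show ?thesis unfolding C_def K_def by (simp add: algebra_simps)
qed


lemma final_bound:
  assumes x8: "exp 8 \<le> real n"
  shows "expected_compacted_size n \<le> 44 * (real n / ln (real n))"
proof -
  define x where "x = real n"
  define L where "L = ln x"
  have xpos: "x > 0" using x8 exp_gt_zero[of 8] unfolding x_def by linarith
  have L8: "L \<ge> 8" unfolding L_def using ln_ge_iff[OF xpos] x8 x_def by simp
  have x1: "x \<ge> 1" using x8 exp_ge_add_one_self[of 8] unfolding x_def by linarith
  have n1: "n \<ge> 1" using x1 unfolding x_def by simp
  define k where "k = nat \<lfloor>L / 4\<rfloor>"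
  have kf: "real k = of_int \<lfloor>L / 4\<rfloor>" unfolding k_def using L8 by simp
  have k_le: "real k \<le> L / 4" using kf by linarith
  have k_ge: "real k > L / 4 - 1" using kf by linarith
  then have kL: "real k \<ge> L / 8" using L8 by linarith
  have kpos: "real k > 1" using k_ge L8 by linarith
  then have k1: "k \<ge> 1" by simp
  define m where "m = n div k"
  have mn: "m \<le> n" unfolding m_def by simp
  have E: "expected_compacted_size n \<le> (2::real)^(2*k+1) + real m + 2 * real n * (real n + 1) / (real k * (real k + 1)) * (1 / (real m + 1))"
    using E_bound[OF n1 k1 mn] by simp
  have A: "(2::real)^(2*k+1) \<le> 2 * sqrt x"
  proof -
    have "(2::real)^(2*k) \<le> exp 1 ^ (2*k)"
      using exp_ge_add_one_self[of 1] by (intro power_mono) auto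
    also have "\<dots> = exp (real (2*k) * 1)" by (rule exp_of_nat_mult[symmetric])
    also have "\<dots> \<le> exp (L / 2)" using k_le by simp
    also have "\<dots> = sqrt x"
    proof -
      have "ln (sqrt x) = L / 2" unfolding L_def using xpos by (simp add: ln_sqrt)
      then show ?thesis using xpos by (metis exp_ln real_sqrt_gt_zero)
    qed
    finally show ?thesis by simp
  qed
  have B: "real m \<le> x / k"
  proof -
    have "k * m \<le> n" unfolding m_def by (simp add: times_div_less_eq_dividend)
    then have "real k * real m \<le> x" unfolding x_def by (metis of_nat_le_iff of_nat_mult)
    then show ?thesis using kpos by (simp add: field_simps)
  qed
  have mk: "x \<le> real k * (real m + 1)"
  proof -
    have "n < k * (n div k + 1)" using k1
      by (metis add.commute div_mult_mod_eq mod_less_divisor mult.commute mult_Suc_right nat_add_left_cancel_less not_one_le_zero plus_1_eq_Suc zero_less_iff_neq_zero)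
    then have "real n \<le> real (k * (m + 1))" unfolding m_def by linarith
    then show ?thesis unfolding x_def by (simp add: algebra_simps)
  qed
  have Cc: "2 * real n * (real n + 1) / (real k * (real k + 1)) * (1 / (real m + 1)) \<le> 4 * (x / real k)"
  proof -
    have "2 * real n * (real n + 1) / (real k * (real k + 1)) * (1 / (real m + 1)) = 2 * x * (x + 1) / ((real k * (real m + 1)) * (real k + 1))"
      unfolding x_def by (simp add: field_simps)
    also have "\<dots> \<le> 2 * x * (x + 1) / (x * (real k + 1))"
    proof (rule divide_left_mono)
      show "x * (real k + 1) \<le> real k * (real m + 1) * (real k + 1)"
        using mk by (rule mult_right_mono) simp
      show "0 \<le> 2 * x * (x + 1)" using xpos by simp
      show "0 < real k * (real m + 1) * (real k + 1) * (x * (real k + 1))"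
        using xpos kpos by (intro mult_pos_pos) auto
    qed
    also have "\<dots> = x * (2 * (x + 1)) / (x * (real k + 1))" by (simp add: algebra_simps)
    also have "\<dots> = 2 * (x + 1) / (real k + 1)" using xpos by (intro mult_divide_mult_cancel_left) simp
    also have "\<dots> \<le> 4 * x / (real k + 1)"
      using x1 kpos by (intro divide_right_mono) auto
    also have "\<dots> \<le> 4 * x / real k"
      using x1 kpos by (intro divide_left_mono) auto
    also have "\<dots> = 4 * (x / real k)" by simp
    finally show ?thesis .
  qed
  have S: "sqrt x \<le> 2 * x / L"
  proof -
    have "ln (sqrt x) \<le> sqrt x - 1" using xpos by (intro ln_le_minus_one) simp
    then have "L \<le> 2 * sqrt x" unfolding L_def using xpos by (simp add: ln_sqrt)
    then have "sqrt x * L \<le> sqrt x * (2 * sqrt x)" using xpos by (intro mult_left_mono) auto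
    also have "\<dots> = 2 * x" using xpos by simp
    finally show ?thesis using L8 by (simp add: field_simps)
  qed
  have xk: "x / k \<le> 8 * x / L"
  proof -
    have "x / k \<le> x / (L / 8)" using kL L8 xpos by (intro divide_left_mono) auto
    then show ?thesis by (simp add: mult.commute)
  qed
  then have "expected_compacted_size n \<le> 2 * (2 * x / L) + 5 * (8 * x / L)"
    using E A B Cc S xk by linarith
  also have "\<dots> = 44 * (x / L)" by (simp add: field_simps)
  finally show ?thesis unfolding x_def L_def .
qed


theorem theorem2p8:
  shows "expected_compacted_size \<in> O(\<lambda>n. real n / ln (real n))"
proof (rule bigoI[where c = 44])
  show "\<forall>\<^sub>F n in at_top. norm (expected_compacted_size n) \<le> 44 * norm (real n / ln (real n))"
    unfolding eventually_at_top_linorder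
  proof (intro exI[of _ "nat \<lceil>exp (8::real)\<rceil>"] allI impI)
    fix n :: nat assume "nat \<lceil>exp (8::real)\<rceil> \<le> n"
    then have x8: "exp (8::real) \<le> real n" by linarith
    have "0 \<le> expected_compacted_size n" unfolding expected_compacted_size_def
      by (intro divide_nonneg_nonneg sum_nonneg) auto
    moreover have "0 \<le> real n / ln (real n)"
    proof -
      have "1 \<le> real n" using x8 exp_ge_add_one_self[of 8] by linarith
      then show ?thesis by simp
    qed
    moreover have "0 \<le> ln (real n)" using x8 exp_ge_add_one_self[of 8] by simp
    ultimately show "norm (expected_compacted_size n) \<le> 44 * norm (real n / ln (real n))"
      using final_bound[OF x8] by simp
  qed
qed

end
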